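(* Let $X\subseteq\{0,1\}^{\mathbb Z}$ be a measure-theoretically subordinate subshift. Then the base measure $\nu$ of $X$ is unique and ergodic. Moreover, $\nu$ is the unique measure in $\mathcal M(X)$ satisfying \[ \nu(1)=\sup_{\mu\in\mathcal M(X)}\mu(1), \] where for a measure $\mu$ on $\{0,1\}^{\mathbb Z}$ we write $\mu(1)=\mu(\{x: x_0=1\})$.
   Context: $\sigma$ denotes the left shift on $\{0,1\}^{\mathbb Z}$; a subshift is a closed $\sigma$-invariant subset. For a subshift (or product of subshifts) $Y$, $\mathcal M(Y)$ denotes the set of Borel probability measures on $Y$ invariant under the (product) shift. Let $M\colon\{0,1\}^{\mathbb Z}\times\{0,1\}^{\mathbb Z}\to\{0,1\}^{\mathbb Z}$ be coordinatewise multiplication, $M(x,y)_n=x_ny_n$, and $\pi_1$ the projection onto the first coordinate. A subshift $X\subseteq\{0,1\}^{\mathbb Z}$ is a measure-theoretically subordinate subshift if there exists $\nu\in\mathcal M(\{0,1\}^{\mathbb Z})$ such that $\mathcal M(X)=\{M_*(\lambda):\lambda\in\mathcal M(\{0,1\}^{\mathbb Z}\times\{0,1\}^{\mathbb Z},\sigma\times\sigma),\ (\pi_1)_*\lambda=\nu\}$; any such $\nu$ is called a base measure. *)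

theory Defs
  imports "HOL-Analysis.Analysis" "HOL-Probability.Probability"
begin

text \<open>Points of the full shift {0,1}^Z are functions int => bool (True = 1).\<close>

definition shift :: "(int \<Rightarrow> bool) \<Rightarrow> (int \<Rightarrow> bool)" where
  "shift x = (\<lambda>n. x (n + 1))"

definition full_shift_top :: "(int \<Rightarrow> bool) topology" where
  "full_shift_top = product_topology (\<lambda>_. discrete_topology UNIV) UNIV"

definition subshift :: "(int \<Rightarrow> bool) set \<Rightarrow> bool" where
  "subshift X \<longleftrightarrow> closedin full_shift_top X \<and> shift ` X = X"

text \<open>Borel sigma-algebra of {0,1}^Z (= product sigma-algebra).\<close>
definition Omega :: "(int \<Rightarrow> bool) measure" where
  "Omega = PiM UNIV (\<lambda>_. count_space UNIV)"

definition Omega2 :: "((int \<Rightarrow> bool) \<times> (int \<Rightarrow> bool)) measure" where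
  "Omega2 = Omega \<Otimes>\<^sub>M Omega"

definition inv_prob :: "(int \<Rightarrow> bool) measure \<Rightarrow> bool" where
  "inv_prob \<mu> \<longleftrightarrow> prob_space \<mu> \<and> sets \<mu> = sets Omega \<and> distr \<mu> Omega shift = \<mu>"

definition MX :: "(int \<Rightarrow> bool) set \<Rightarrow> (int \<Rightarrow> bool) measure set" where
  "MX X = {\<mu>. inv_prob \<mu> \<and> emeasure \<mu> X = 1}"

definition inv_prob2 :: "((int \<Rightarrow> bool) \<times> (int \<Rightarrow> bool)) measure \<Rightarrow> bool" where
  "inv_prob2 L \<longleftrightarrow> prob_space L \<and> sets L = sets Omega2 \<and>
     distr L Omega2 (map_prod shift shift) = L"

definition mult :: "(int \<Rightarrow> bool) \<times> (int \<Rightarrow> bool) \<Rightarrow> (int \<Rightarrow> bool)" where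
  "mult p = (\<lambda>n. fst p n \<and> snd p n)"

definition base_measure :: "(int \<Rightarrow> bool) set \<Rightarrow> (int \<Rightarrow> bool) measure \<Rightarrow> bool" where
  "base_measure X \<nu> \<longleftrightarrow> inv_prob \<nu> \<and>
     MX X = {distr L Omega mult | L. inv_prob2 L \<and> distr L Omega fst = \<nu>}"

definition meas_subordinate :: "(int \<Rightarrow> bool) set \<Rightarrow> bool" where
  "meas_subordinate X \<longleftrightarrow> subshift X \<and> (\<exists>\<nu>. base_measure X \<nu>)"

definition ergodic :: "(int \<Rightarrow> bool) measure \<Rightarrow> bool" where
  "ergodic \<mu> \<longleftrightarrow> (\<forall>A \<in> sets Omega. shift -` A = A \<longrightarrow> emeasure \<mu> A = 0 \<or> emeasure \<mu> A = 1)"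

definition cyl1 :: "(int \<Rightarrow> bool) set" where
  "cyl1 = {x. x 0}"

end

theory Submission
  imports Defs
begin

lemma space_Omega[simp]: "space Omega = UNIV"
  by (simp add: Omega_def space_PiM)

lemma sets_Omega2: "sets Omega2 = sets (Omega \<Otimes>\<^sub>M Omega)"
  by (simp add: Omega2_def)

lemma space_Omega2[simp]: "space Omega2 = UNIV"
  by (simp add: Omega2_def space_pair_measure)

lemma coord_meas[measurable]: "(\<lambda>x. x i) \<in> Omega \<rightarrow>\<^sub>M count_space UNIV"
  unfolding Omega_def by (rule measurable_component_singleton) simp

lemma into_Omega:
  assumes "\<And>i. (\<lambda>w. f w i) \<in> N \<rightarrow>\<^sub>M count_space UNIV"
  shows "f \<in> N \<rightarrow>\<^sub>M Omega"
proof -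
  have "(\<lambda>w i. f w i) \<in> N \<rightarrow>\<^sub>M Omega"
    unfolding Omega_def by (rule measurable_PiM_single') (auto simp: assms)
  then show ?thesis by simp
qed

lemma shift_meas[measurable]: "shift \<in> Omega \<rightarrow>\<^sub>M Omega"
  by (rule into_Omega) (simp add: shift_def)

lemma mult_meas[measurable]: "mult \<in> Omega2 \<rightarrow>\<^sub>M Omega"
  unfolding Omega2_def
  by (rule into_Omega) (simp add: mult_def)

lemma fst_meas[measurable]: "fst \<in> Omega2 \<rightarrow>\<^sub>M Omega"
  unfolding Omega2_def by simp

lemma snd_meas[measurable]: "snd \<in> Omega2 \<rightarrow>\<^sub>M Omega"
  unfolding Omega2_def by simp

lemma mapprod_meas[measurable]: "map_prod shift shift \<in> Omega2 \<rightarrow>\<^sub>M Omega2"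
  unfolding Omega2_def by (simp add: map_prod_def split_beta')

lemma pairone_meas[measurable]: "(\<lambda>x. (x, (\<lambda>_. True))) \<in> Omega \<rightarrow>\<^sub>M Omega2"
  unfolding Omega2_def by simp

lemma cyl1_sets[measurable]: "cyl1 \<in> sets Omega"
proof -
  have "cyl1 = (\<lambda>x. x 0) -` {True} \<inter> space Omega" by (auto simp: cyl1_def)
  then show ?thesis by (metis coord_meas measurable_sets sets_UNIV UNIV_I)
qed

lemma fstc[measurable]: "(\<lambda>p. fst p n) \<in> Omega2 \<rightarrow>\<^sub>M count_space UNIV"
  by (rule measurable_compose[OF fst_meas coord_meas])

lemma sndc[measurable]: "(\<lambda>p. snd p n) \<in> Omega2 \<rightarrow>\<^sub>M count_space UNIV"
  by (rule measurable_compose[OF snd_meas coord_meas])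

lemma space_inv: "inv_prob \<nu> \<Longrightarrow> space \<nu> = UNIV"
  unfolding inv_prob_def using sets_eq_imp_space_eq[of \<nu> Omega] by simp

lemma space_inv2: "inv_prob2 L \<Longrightarrow> space L = UNIV"
  unfolding inv_prob2_def using sets_eq_imp_space_eq[of L Omega2] by simp

lemma lemA:
  assumes "inv_prob \<nu>"
  shows "\<exists>L. inv_prob2 L \<and> distr L Omega fst = \<nu> \<and> distr L Omega mult = \<nu>"
proof -
  define g where "g = (\<lambda>x::int\<Rightarrow>bool. (x, (\<lambda>_::int. True)))"
  have gm: "g \<in> \<nu> \<rightarrow>\<^sub>M Omega2"
    using assms unfolding inv_prob_def g_def
    by (simp add: measurable_cong_sets[OF _ refl, of \<nu> Omega])
  have ps: "prob_space \<nu>" and sn: "sets \<nu> = sets Omega" and inv: "distr \<nu> Omega shift = \<nu>"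
    using assms by (auto simp: inv_prob_def)
  define L where "L = distr \<nu> Omega2 g"
  have "prob_space L" unfolding L_def using prob_space.prob_space_distr[OF ps gm] .
  moreover have "sets L = sets Omega2" unfolding L_def by simp
  moreover have "distr L Omega2 (map_prod shift shift) = L"
  proof -
    have "distr L Omega2 (map_prod shift shift) = distr \<nu> Omega2 (map_prod shift shift \<circ> g)"
      unfolding L_def by (rule distr_distr[OF mapprod_meas gm])
    also have "map_prod shift shift \<circ> g = g \<circ> shift"
      by (auto simp: g_def shift_def fun_eq_iff)
    also have "distr \<nu> Omega2 (g \<circ> shift) = distr (distr \<nu> Omega shift) Omega2 g"
      apply (rule distr_distr[symmetric])
      using gm sn apply (simp add: measurable_cong_sets[OF sn refl])
      using sn by (simp add: measurable_cong_sets[OF sn refl])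
    also have "\<dots> = L" using inv L_def by simp
    finally show ?thesis .
  qed
  moreover have "distr L Omega fst = \<nu>"
  proof -
    have "distr L Omega fst = distr \<nu> Omega (fst \<circ> g)"
      unfolding L_def by (rule distr_distr[OF fst_meas gm])
    also have "fst \<circ> g = (\<lambda>x. x)" by (auto simp: g_def)
    finally show ?thesis using distr_id2[OF sn[symmetric]] by simp
  qed
  moreover have "distr L Omega mult = \<nu>"
  proof -
    have "distr L Omega mult = distr \<nu> Omega (mult \<circ> g)"
      unfolding L_def by (rule distr_distr[OF mult_meas gm])
    also have "mult \<circ> g = (\<lambda>x. x)" by (auto simp: g_def mult_def)
    finally show ?thesis using distr_id2[OF sn[symmetric]] by simp
  qed
  ultimately show ?thesis unfolding inv_prob2_def by blast
qed

definition Dset :: "int \<Rightarrow> ((int \<Rightarrow> bool) \<times> (int \<Rightarrow> bool)) set" where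
  "Dset n = {p. fst p n \<and> \<not> snd p n}"

lemma Dset_sets[measurable]: "Dset n \<in> sets Omega2"
proof -
  have "Dset n = {p \<in> space Omega2. fst p n \<and> \<not> snd p n}" by (simp add: Dset_def)
  also have "\<dots> \<in> sets Omega2" by measurable
  finally show ?thesis .
qed

lemma lemB:
  assumes L: "inv_prob2 L" and nu: "distr L Omega fst = \<nu>"
  shows "measure (distr L Omega mult) cyl1 \<le> measure \<nu> cyl1"
    and "measure (distr L Omega mult) cyl1 = measure \<nu> cyl1 \<Longrightarrow> distr L Omega mult = \<nu>"
proof -
  have ps: "prob_space L" and sL: "sets L = sets Omega2" and inv: "distr L Omega2 (map_prod shift shift) = L"
    using L by (auto simp: inv_prob2_def)
  interpret prob_space L by (rule ps)
  have spL: "space L = UNIV" using space_inv2[OF L] .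
  have mm: "mult \<in> L \<rightarrow>\<^sub>M Omega" by (simp add: measurable_cong_sets[OF sL refl])
  have fm: "fst \<in> L \<rightarrow>\<^sub>M Omega" by (simp add: measurable_cong_sets[OF sL refl])
  have sm: "map_prod shift shift \<in> L \<rightarrow>\<^sub>M Omega2" by (simp add: measurable_cong_sets[OF sL refl])
  have Ds: "Dset n \<in> events" for n using sL by simp
  have e1: "measure (distr L Omega mult) cyl1 = measure L (mult -` cyl1)"
    using measure_distr[OF mm cyl1_sets] spL by simp
  have e2: "measure \<nu> cyl1 = measure L (fst -` cyl1)"
    using measure_distr[OF fm cyl1_sets] spL nu by simp
  have s1: "mult -` cyl1 \<in> events" using measurable_sets[OF mm cyl1_sets] spL by simp
  have s2: "fst -` cyl1 \<in> events" using measurable_sets[OF fm cyl1_sets] spL by simp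
  have sub: "mult -` cyl1 \<subseteq> fst -` cyl1" by (auto simp: mult_def cyl1_def)
  show "measure (distr L Omega mult) cyl1 \<le> measure \<nu> cyl1"
    unfolding e1 e2 using finite_measure_mono[OF sub s2] .
  assume eq: "measure (distr L Omega mult) cyl1 = measure \<nu> cyl1"
  have "Dset 0 = fst -` cyl1 - mult -` cyl1" by (auto simp: Dset_def mult_def cyl1_def)
  then have D0: "measure L (Dset 0) = 0"
    using finite_measure_Diff[OF s2 s1 sub] eq e1 e2 by simp
  have step: "measure L (Dset (n+1)) = measure L (Dset n)" for n
  proof -
    have "map_prod shift shift -` Dset n = Dset (n+1)" by (auto simp: Dset_def shift_def)
    then have "measure (distr L Omega2 (map_prod shift shift)) (Dset n) = measure L (Dset (n+1))"
      using measure_distr[OF sm Dset_sets] spL by simp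
    then show ?thesis using inv by simp
  qed
  have "measure L (Dset n) = measure L (Dset 0)" for n
  proof (induct n rule: int_induct[where k=0])
    case base then show ?case by simp
  next
    case (step1 i) then show ?case using step[of i] by simp
  next
    case (step2 i) then show ?case using step[of "i - 1"] by simp
  qed
  then have "\<forall>n. AE p in L. p \<notin> Dset n"
    using D0 Ds by (intro allI AE_not_in) (simp add: emeasure_eq_measure null_sets_def)
  then have "AE p in L. \<forall>n. p \<notin> Dset n" by (simp add: AE_all_countable)
  then have "AE p in L. mult p = fst p"
    by eventually_elim (auto simp: Dset_def mult_def fun_eq_iff)
  then have "distr L Omega mult = distr L Omega fst"
    by (intro distr_cong_AE[OF refl refl _ mm fm])
  then show "distr L Omega mult = \<nu>" using nu by simp
qed

lemma lemC:
  assumes nu: "\<nu> \<in> MX X" and A: "A \<in> sets Omega" and Ai: "shift -` A = A"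
    and A0: "emeasure \<nu> A \<noteq> 0"
  shows "uniform_measure \<nu> A \<in> MX X"
proof -
  have ip: "inv_prob \<nu>" and X1: "emeasure \<nu> X = 1" using nu by (auto simp: MX_def)
  have ps: "prob_space \<nu>" and sn: "sets \<nu> = sets Omega" and inv: "distr \<nu> Omega shift = \<nu>"
    using ip by (auto simp: inv_prob_def)
  interpret prob_space \<nu> by (rule ps)
  have sp: "space \<nu> = UNIV" using space_inv[OF ip] .
  have As: "A \<in> sets \<nu>" using A sn by simp
  have Xs: "X \<in> sets \<nu>" using X1 emeasure_notin_sets by fastforce
  have Af: "emeasure \<nu> A \<noteq> \<infinity>" by simp
  have shm: "shift \<in> \<nu> \<rightarrow>\<^sub>M Omega" by (simp add: measurable_cong_sets[OF sn refl])
  define U where "U = uniform_measure \<nu> A"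
  have "prob_space U" unfolding U_def using prob_space_uniform_measure[OF A0 Af] .
  moreover have sU: "sets U = sets Omega" unfolding U_def using sn by simp
  moreover have "distr U Omega shift = U"
  proof (rule measure_eqI)
    show "sets (distr U Omega shift) = sets U" using sU by simp
    fix S assume "S \<in> sets (distr U Omega shift)"
    then have S: "S \<in> sets Omega" by simp
    have shU: "shift \<in> U \<rightarrow>\<^sub>M Omega" by (simp add: measurable_cong_sets[OF sU refl])
    have "emeasure (distr U Omega shift) S = emeasure U (shift -` S)"
      using emeasure_distr[OF shU S] sp by (simp add: U_def)
    also have "\<dots> = emeasure \<nu> (A \<inter> shift -` S) / emeasure \<nu> A"
      unfolding U_def using As measurable_sets[OF shm S] sp by simp
    also have "A \<inter> shift -` S = shift -` (A \<inter> S)" using Ai by auto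
    also have "emeasure \<nu> (shift -` (A \<inter> S)) = emeasure (distr \<nu> Omega shift) (A \<inter> S)"
      using emeasure_distr[OF shm, of "A \<inter> S"] sp A S by simp
    also have "\<dots> = emeasure \<nu> (A \<inter> S)" using inv by simp
    also have "emeasure \<nu> (A \<inter> S) / emeasure \<nu> A = emeasure U S"
      unfolding U_def using As S sn by simp
    finally show "emeasure (distr U Omega shift) S = emeasure U S" .
  qed
  moreover have "emeasure U X = 1"
  proof -
    have "AE x in \<nu>. x \<in> X" using AE_in_set_eq_1[OF Xs] X1 by (simp add: emeasure_eq_measure)
    then have "emeasure \<nu> (A \<inter> X) = emeasure \<nu> A"
      by (intro emeasure_eq_AE) (auto simp: As Xs)
    moreover have "emeasure \<nu> A / emeasure \<nu> A = 1"
      by (metis Af ennreal_divide_self[OF A0] top.not_eq_extremum infinity_ennreal_def)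
    ultimately show ?thesis unfolding U_def using As Xs by simp
  qed
  ultimately show ?thesis unfolding MX_def inv_prob_def U_def by simp
qed

lemma max_le:
  assumes b: "base_measure X \<nu>" and mu: "\<mu> \<in> MX X"
  shows "measure \<mu> cyl1 \<le> measure \<nu> cyl1"
proof -
  have "MX X = {distr L Omega mult | L. inv_prob2 L \<and> distr L Omega fst = \<nu>}"
    using b by (simp add: base_measure_def)
  with mu have "\<exists>L. \<mu> = distr L Omega mult \<and> inv_prob2 L \<and> distr L Omega fst = \<nu>"
    by (simp only: mem_Collect_eq)
  then obtain L where "inv_prob2 L" "distr L Omega fst = \<nu>" "\<mu> = distr L Omega mult"
    by blast
  then show ?thesis using lemB(1)[of L \<nu>] by simp
qed

lemma max_eq:
  assumes b: "base_measure X \<nu>" and mu: "\<mu> \<in> MX X"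
    and eq: "measure \<mu> cyl1 = measure \<nu> cyl1"
  shows "\<mu> = \<nu>"
proof -
  have "MX X = {distr L Omega mult | L. inv_prob2 L \<and> distr L Omega fst = \<nu>}"
    using b by (simp add: base_measure_def)
  with mu have "\<exists>L. \<mu> = distr L Omega mult \<and> inv_prob2 L \<and> distr L Omega fst = \<nu>"
    by (simp only: mem_Collect_eq)
  then obtain L where "inv_prob2 L" "distr L Omega fst = \<nu>" "\<mu> = distr L Omega mult"
    by blast
  then show ?thesis using lemB(2)[of L \<nu>] eq by simp
qed

lemma nu_in:
  assumes b: "base_measure X \<nu>"
  shows "\<nu> \<in> MX X"
proof -
  from b have "inv_prob \<nu>" by (simp add: base_measure_def)
  from lemA[OF this] obtain L where "inv_prob2 L \<and> distr L Omega fst = \<nu> \<and> distr L Omega mult = \<nu>" by blast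
  then have "\<nu> \<in> {distr L Omega mult | L. inv_prob2 L \<and> distr L Omega fst = \<nu>}"
    by (simp only: mem_Collect_eq) metis
  moreover have "MX X = {distr L Omega mult | L. inv_prob2 L \<and> distr L Omega fst = \<nu>}"
    using b by (simp add: base_measure_def)
  ultimately show ?thesis by simp
qed

lemma sup_eq:
  assumes b: "base_measure X \<nu>"
  shows "(SUP \<mu>\<in>MX X. measure \<mu> cyl1) = measure \<nu> cyl1"
  by (rule cSup_eq_maximum) (use nu_in[OF b] max_le[OF b] in auto)

lemma erg:
  assumes b: "base_measure X \<nu>"
  shows "ergodic \<nu>"
  unfolding ergodic_def
proof (intro ballI impI)
  fix A assume A: "A \<in> sets Omega" and Ai: "shift -` A = A"
  have nu: "\<nu> \<in> MX X" using nu_in[OF b] .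
  have ip: "inv_prob \<nu>" using nu by (simp add: MX_def)
  then have ps: "prob_space \<nu>" and sn: "sets \<nu> = sets Omega" by (auto simp: inv_prob_def)
  interpret prob_space \<nu> by (rule ps)
  have sp: "space \<nu> = UNIV" using space_inv[OF ip] .
  show "emeasure \<nu> A = 0 \<or> emeasure \<nu> A = 1"
  proof (rule ccontr)
    assume "\<not> ?thesis"
    then have n0: "emeasure \<nu> A \<noteq> 0" and n1: "emeasure \<nu> A \<noteq> 1" by auto
    define B where "B = UNIV - A"
    have As: "A \<in> events" using A sn by simp
    have Bs: "B \<in> events" using As sp by (metis B_def sets.compl_sets)
    have Bi: "shift -` B = B" using Ai by (auto simp: B_def)
    have a0: "measure \<nu> A \<noteq> 0" using n0 by (simp add: emeasure_eq_measure)
    have a1: "measure \<nu> A \<noteq> 1" using n1 by (simp add: emeasure_eq_measure)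
    have pB: "measure \<nu> B = 1 - measure \<nu> A" using prob_compl[OF As] sp by (simp add: B_def)
    have a01: "0 < measure \<nu> A" "measure \<nu> A < 1" using a0 a1 prob_le_1[of A] measure_nonneg[of \<nu> A] by linarith+
    have nB0: "emeasure \<nu> B \<noteq> 0" using pB a01 by (simp add: emeasure_eq_measure)
    have Bs': "B \<in> sets Omega" using Bs sn by simp
    have UA: "uniform_measure \<nu> A \<in> MX X" by (rule lemC[OF nu A Ai n0])
    have UB: "uniform_measure \<nu> B \<in> MX X" by (rule lemC[OF nu Bs' Bi nB0])
    have c: "cyl1 \<in> events" using sn by simp
    have mA: "measure (uniform_measure \<nu> A) cyl1 = measure \<nu> (A \<inter> cyl1) / measure \<nu> A"
      using n0 c by simp
    have mB: "measure (uniform_measure \<nu> B) cyl1 = measure \<nu> (B \<inter> cyl1) / measure \<nu> B"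
      using nB0 c by simp
    have split: "measure \<nu> cyl1 = measure \<nu> (A \<inter> cyl1) + measure \<nu> (B \<inter> cyl1)"
    proof -
      have "cyl1 = (A \<inter> cyl1) \<union> (B \<inter> cyl1)" by (auto simp: B_def)
      moreover have "measure \<nu> ((A \<inter> cyl1) \<union> (B \<inter> cyl1)) = measure \<nu> (A \<inter> cyl1) + measure \<nu> (B \<inter> cyl1)"
        by (rule finite_measure_Union) (use As Bs c in \<open>auto simp: B_def\<close>)
      ultimately show ?thesis by simp
    qed
    define a where "a = measure \<nu> A"
    define p where "p = measure \<nu> cyl1"
    define xa where "xa = measure \<nu> (A \<inter> cyl1)"
    define xb where "xb = measure \<nu> (B \<inter> cyl1)"
    have la: "xa / a \<le> p" using max_le[OF b UA] mA unfolding xa_def a_def p_def by simp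
    have lb: "xb / (1 - a) \<le> p" using max_le[OF b UB] mB pB unfolding xb_def a_def p_def by simp
    have apos: "0 < a" "a < 1" using a01 by (auto simp: a_def)
    have la': "xa \<le> p * a" using la apos by (simp add: divide_le_eq)
    have lb': "xb \<le> p * (1 - a)" using lb apos by (simp add: divide_le_eq)
    have sp': "p = xa + xb" using split unfolding p_def xa_def xb_def .
    have "xa = p * a" using la' lb' sp' by (simp add: algebra_simps)
    then have "xa / a = p" using apos by simp
    then have "measure (uniform_measure \<nu> A) cyl1 = measure \<nu> cyl1"
      using mA unfolding xa_def a_def p_def by simp
    then have "uniform_measure \<nu> A = \<nu>" using max_eq[OF b UA] by simp
    moreover have "emeasure (uniform_measure \<nu> A) A = 1"
      by (rule emeasure_uniform_measure_1[OF n0]) simp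
    ultimately show False using n1 by simp
  qed
qed

theorem proposition3p1:
  assumes "meas_subordinate X"
  shows "(\<exists>!\<nu>. base_measure X \<nu>) \<and>
    (\<forall>\<nu>. base_measure X \<nu> \<longrightarrow>
       ergodic \<nu> \<and> \<nu> \<in> MX X \<and>
       measure \<nu> cyl1 = (SUP \<mu>\<in>MX X. measure \<mu> cyl1) \<and>
       (\<forall>\<mu>\<in>MX X. measure \<mu> cyl1 = (SUP \<mu>'\<in>MX X. measure \<mu>' cyl1) \<longrightarrow> \<mu> = \<nu>))"
proof -
  from assms obtain \<nu> where b: "base_measure X \<nu>" by (auto simp: meas_subordinate_def)
  have uniq: "\<nu>' = \<nu>" if b': "base_measure X \<nu>'" for \<nu>'
  proof -
    have "measure \<nu>' cyl1 \<le> measure \<nu> cyl1" using max_le[OF b nu_in[OF b']] .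
    moreover have "measure \<nu> cyl1 \<le> measure \<nu>' cyl1" using max_le[OF b' nu_in[OF b]] .
    ultimately show ?thesis using max_eq[OF b nu_in[OF b']] by linarith
  qed
  have "\<exists>!\<nu>. base_measure X \<nu>" using b uniq by blast
  moreover have "ergodic \<nu>' \<and> \<nu>' \<in> MX X \<and>
       measure \<nu>' cyl1 = (SUP \<mu>\<in>MX X. measure \<mu> cyl1) \<and>
       (\<forall>\<mu>\<in>MX X. measure \<mu> cyl1 = (SUP \<mu>'\<in>MX X. measure \<mu>' cyl1) \<longrightarrow> \<mu> = \<nu>')"
    if b': "base_measure X \<nu>'" for \<nu>'
    unfolding sup_eq[OF b'] using erg[OF b'] nu_in[OF b'] max_eq[OF b'] by blast
  ultimately show ?thesis by blast
qed

end
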